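(* Let $X,Y$ be compact metric spaces, $\pi_0$ a Borel probability on $X\times Y$ which is positive on nonempty open sets, with $x$-marginal $P_0$, and let $\nu$ be a Borel probability on $X$ with $\operatorname{supp}(\nu)=X$. Suppose there is a continuous $\phi:X\times Y\to\mathbb{R}$ such that $e^{\phi}$ is a $\nu$-Jacobian of $\pi_0$. Then there is a continuous $\psi_0:X\times Y\to\mathbb{R}$ such that $e^{\psi_0}$ is a $P_0$-Jacobian of $\pi_0$, and for every Borel probability $\pi$ on $X\times Y$, \[IG(\pi,\pi_0):=-\int\psi_0\,d\pi-H^{P_0}(\pi)\;=\;-\int\phi\,d\pi-H^{\nu}(\pi).\]
   Context: For a probability $\rho$ on $X$, a measurable $J:X\times Y\to[0,\infty)$ is a $\rho$-Jacobian of a probability $\pi$ on $X\times Y$ with $y$-marginal $Q$ if $\int J(x,y)\,d\rho(x)=1$ for every $y$ and $\int\!\int g(x,y)J(x,y)\,d\rho(x)\,dQ(y)=\int g\,d\pi$ for every bounded measurable $g$. $\mathcal{F}(\pi)$ is the set of measurable functions whose $\pi$-integral is well defined (not $+\infty-\infty$), and $H^{\rho}(\pi)=-\sup\{\int c\,d\pi:\ c\in\mathcal{F}(\pi),\ \int e^{c(x,y)}\,d\rho(x)=1\ \forall y\in Y\}$. *)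

theory Defs
  imports "HOL-Probability.Probability"
begin

definition support :: "'a::topological_space measure \<Rightarrow> 'a set" where
  "support \<mu> = {x. \<forall>U. open U \<longrightarrow> x \<in> U \<longrightarrow> emeasure \<mu> U > 0}"

definition is_jacobian ::
  "'a::topological_space measure \<Rightarrow> ('a \<times> 'b::topological_space) measure \<Rightarrow> ('a \<times> 'b \<Rightarrow> real) \<Rightarrow> bool" where
  "is_jacobian \<rho> \<pi> J \<longleftrightarrow>
     J \<in> borel_measurable borel \<and> (\<forall>z. 0 \<le> J z) \<and>
     (\<forall>y. (\<integral>\<^sup>+ x. ennreal (J (x, y)) \<partial>\<rho>) = 1) \<and>
     (\<forall>g \<in> borel_measurable (borel :: ('a \<times> 'b) measure). (\<exists>B. \<forall>z. \<bar>g z\<bar> \<le> B) \<longrightarrow>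
        (\<integral>y. (\<integral>x. g (x, y) * J (x, y) \<partial>\<rho>) \<partial>(distr \<pi> borel snd)) = (\<integral>z. g z \<partial>\<pi>))"

definition int_well_defined :: "'c measure \<Rightarrow> ('c \<Rightarrow> real) \<Rightarrow> bool" where
  "int_well_defined M c \<longleftrightarrow> c \<in> borel_measurable M \<and>
     \<not> ((\<integral>\<^sup>+ z. ennreal (c z) \<partial>M) = \<infinity> \<and> (\<integral>\<^sup>+ z. ennreal (- c z) \<partial>M) = \<infinity>)"

definition ext_integral :: "'c measure \<Rightarrow> ('c \<Rightarrow> real) \<Rightarrow> ereal" where
  "ext_integral M c = enn2ereal (\<integral>\<^sup>+ z. ennreal (c z) \<partial>M) - enn2ereal (\<integral>\<^sup>+ z. ennreal (- c z) \<partial>M)"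

definition rel_entropy_H :: "'a measure \<Rightarrow> ('a \<times> 'b) measure \<Rightarrow> ereal" where
  "rel_entropy_H \<rho> \<pi> = - (SUP c \<in> {c. int_well_defined \<pi> c \<and>
        (\<forall>y. (\<integral>\<^sup>+ x. ennreal (exp (c (x, y))) \<partial>\<rho>) = 1)}. ext_integral \<pi> c)"

end

theory Submission
  imports Defs
begin

lemma nn_pos_shift_fin:
  fixes c h :: "'c \<Rightarrow> real"
  assumes fm: "finite_measure M" and [measurable]: "c \<in> borel_measurable M" "h \<in> borel_measurable M"
    and hb: "\<And>z. \<bar>h z\<bar> \<le> B"
    and fin: "(\<integral>\<^sup>+ z. ennreal (c z) \<partial>M) < \<infinity>"
  shows "(\<integral>\<^sup>+ z. ennreal (c z + h z) \<partial>M) < \<infinity>"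
proof -
  have "(\<integral>\<^sup>+ z. ennreal (c z + h z) \<partial>M) \<le> (\<integral>\<^sup>+ z. ennreal (c z) + ennreal B \<partial>M)"
  proof (rule nn_integral_mono)
    fix z
    have B0: "0 \<le> B" using hb[of z] by linarith
    have "ennreal (c z + h z) \<le> ennreal (max (c z) 0 + B)"
      using hb[of z] by (intro ennreal_leI) auto
    also have "\<dots> = ennreal (max (c z) 0) + ennreal B"
      using B0 by (intro ennreal_plus) auto
    also have "ennreal (max (c z) 0) = ennreal (c z)"
      by (simp add: max_def ennreal_neg)
    finally show "ennreal (c z + h z) \<le> ennreal (c z) + ennreal B" .
  qed
  also have "\<dots> = (\<integral>\<^sup>+ z. ennreal (c z) \<partial>M) + (\<integral>\<^sup>+ z. ennreal B \<partial>M)"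
    by (rule nn_integral_add) auto
  also have "(\<integral>\<^sup>+ z. ennreal B \<partial>M) = ennreal B * emeasure M (space M)"
    by simp
  also have "\<dots> < \<infinity>"
    using finite_measure.emeasure_finite[OF fm] by (simp add: ennreal_mult_less_top less_top)
  finally show ?thesis using fin by (simp add: less_top)
qed

lemma ext_integral_integrable:
  fixes c :: "'c \<Rightarrow> real"
  assumes "integrable M c"
  shows "ext_integral M c = ereal (integral\<^sup>L M c)"
proof -
  have m: "c \<in> borel_measurable M" using assms by auto
  have n: "(\<integral>\<^sup>+ z. ennreal (norm (c z)) \<partial>M) < \<infinity>" using assms by (simp add: integrable_iff_bounded)
  have p: "(\<integral>\<^sup>+ z. ennreal (c z) \<partial>M) < \<infinity>"
    by (rule le_less_trans[OF _ n], rule nn_integral_mono) (auto intro!: ennreal_leI)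
  have q: "(\<integral>\<^sup>+ z. ennreal (- c z) \<partial>M) < \<infinity>"
    by (rule le_less_trans[OF _ n], rule nn_integral_mono) (auto intro!: ennreal_leI)
  show ?thesis
    unfolding ext_integral_def real_lebesgue_integral_def[OF assms]
  proof -
    have "enn2ereal (\<integral>\<^sup>+ z. ennreal (c z) \<partial>M) = ereal (enn2real (\<integral>\<^sup>+ z. ennreal (c z) \<partial>M))"
      using enn2ereal_ennreal[OF enn2real_nonneg, of "\<integral>\<^sup>+ z. ennreal (c z) \<partial>M"] unfolding ennreal_enn2real[OF p[unfolded infinity_ennreal_def]] .
    moreover have "enn2ereal (\<integral>\<^sup>+ z. ennreal (- c z) \<partial>M) = ereal (enn2real (\<integral>\<^sup>+ z. ennreal (- c z) \<partial>M))"
      using enn2ereal_ennreal[OF enn2real_nonneg, of "\<integral>\<^sup>+ z. ennreal (- c z) \<partial>M"] unfolding ennreal_enn2real[OF q[unfolded infinity_ennreal_def]] .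
    ultimately show "enn2ereal (\<integral>\<^sup>+ z. ennreal (c z) \<partial>M) - enn2ereal (\<integral>\<^sup>+ z. ennreal (- c z) \<partial>M) =
      ereal (enn2real (\<integral>\<^sup>+ z. ennreal (c z) \<partial>M) - enn2real (\<integral>\<^sup>+ z. ennreal (- c z) \<partial>M))" by simp
  qed
qed

lemma integrable_of_fin:
  fixes c :: "'c \<Rightarrow> real"
  assumes [measurable]: "c \<in> borel_measurable M"
    and p: "(\<integral>\<^sup>+ z. ennreal (c z) \<partial>M) < \<infinity>" and q: "(\<integral>\<^sup>+ z. ennreal (- c z) \<partial>M) < \<infinity>"
  shows "integrable M c"
proof -
  have "(\<integral>\<^sup>+ z. ennreal (norm (c z)) \<partial>M) = (\<integral>\<^sup>+ z. ennreal (c z) + ennreal (- c z) \<partial>M)"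
    by (rule nn_integral_cong) (auto simp: ennreal_neg abs_if)
  also have "\<dots> = (\<integral>\<^sup>+ z. ennreal (c z) \<partial>M) + (\<integral>\<^sup>+ z. ennreal (- c z) \<partial>M)"
    by (rule nn_integral_add) auto
  also have "\<dots> < \<infinity>" using p q by (simp add: less_top)
  finally show ?thesis by (simp add: integrable_iff_bounded)
qed

lemma enn2ereal_fin: "x \<noteq> top \<Longrightarrow> enn2ereal x = ereal (enn2real x)"
  by (cases x rule: ennreal_cases) auto

lemma shift_iwd:
  fixes c h :: "'c \<Rightarrow> real"
  assumes fm: "finite_measure M" and hm[measurable]: "h \<in> borel_measurable M"
    and hb: "\<And>z. \<bar>h z\<bar> \<le> B"
    and iwd: "int_well_defined M c"
  shows "int_well_defined M (\<lambda>z. c z + h z)"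
    and "ext_integral M (\<lambda>z. c z + h z) = ext_integral M c + ereal (integral\<^sup>L M h)"
proof -
  have cm[measurable]: "c \<in> borel_measurable M" using iwd by (simp add: int_well_defined_def)
  have hb': "\<And>z. \<bar>- h z\<bar> \<le> B" using hb by simp
  have e1: "(\<integral>\<^sup>+ z. ennreal (c z) \<partial>M) < \<infinity> \<longleftrightarrow> (\<integral>\<^sup>+ z. ennreal (c z + h z) \<partial>M) < \<infinity>"
    using nn_pos_shift_fin[OF fm cm hm hb, of ] nn_pos_shift_fin[where h="\<lambda>z. - h z" and c="\<lambda>z. c z + h z", OF fm _ _ hb']
    by auto
  have e2: "(\<integral>\<^sup>+ z. ennreal (- c z) \<partial>M) < \<infinity> \<longleftrightarrow> (\<integral>\<^sup>+ z. ennreal (- (c z + h z)) \<partial>M) < \<infinity>"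
    using nn_pos_shift_fin[where h="\<lambda>z. - h z" and c="\<lambda>z. - c z", OF fm _ _ hb'] nn_pos_shift_fin[where c="\<lambda>z. - (c z + h z)", OF fm _ hm hb]
    by auto
  show iwd2: "int_well_defined M (\<lambda>z. c z + h z)"
    using iwd e1 e2 unfolding int_well_defined_def by (auto simp: less_top[symmetric] infinity_ennreal_def)
  show "ext_integral M (\<lambda>z. c z + h z) = ext_integral M c + ereal (integral\<^sup>L M h)"
  proof (cases "(\<integral>\<^sup>+ z. ennreal (c z) \<partial>M) < \<infinity> \<and> (\<integral>\<^sup>+ z. ennreal (- c z) \<partial>M) < \<infinity>")
    case True
    then have ic: "integrable M c" by (intro integrable_of_fin) auto
    have ih: "integrable M h"
      using fm hb by (intro finite_measure.integrable_const_bound[where B=B]) auto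
    show ?thesis
      using ic ih by (simp add: ext_integral_integrable)
  next
    case False
    then consider "(\<integral>\<^sup>+ z. ennreal (c z) \<partial>M) = \<infinity>" "(\<integral>\<^sup>+ z. ennreal (- c z) \<partial>M) < \<infinity>"
      | "(\<integral>\<^sup>+ z. ennreal (c z) \<partial>M) < \<infinity>" "(\<integral>\<^sup>+ z. ennreal (- c z) \<partial>M) = \<infinity>"
      using iwd unfolding int_well_defined_def by (auto simp: less_top[symmetric] infinity_ennreal_def)
    then show ?thesis
    proof cases
      case 1
      then have "(\<integral>\<^sup>+ z. ennreal (c z + h z) \<partial>M) = \<infinity>" "(\<integral>\<^sup>+ z. ennreal (- (c z + h z)) \<partial>M) < \<infinity>"
        using e1 e2 by (auto simp: less_top[symmetric] infinity_ennreal_def)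
      then show ?thesis using 1 unfolding ext_integral_def
        by (auto simp: less_top[symmetric] infinity_ennreal_def enn2ereal_fin)
    next
      case 2
      then have "(\<integral>\<^sup>+ z. ennreal (c z + h z) \<partial>M) < \<infinity>" "(\<integral>\<^sup>+ z. ennreal (- (c z + h z)) \<partial>M) = \<infinity>"
        using e1 e2 by (auto simp: less_top[symmetric] infinity_ennreal_def)
      then show ?thesis using 2 unfolding ext_integral_def
        by (auto simp: less_top[symmetric] infinity_ennreal_def enn2ereal_fin)
    qed
  qed
qed



theorem mainTheorem10:
  fixes \<pi>\<^sub>0 :: "('a::{metric_space, second_countable_topology} \<times> 'b::{metric_space, second_countable_topology}) measure"
    and \<nu> :: "'a measure"
    and \<phi> :: "'a \<times> 'b \<Rightarrow> real"
  assumes "compact (UNIV :: 'a set)" and "compact (UNIV :: 'b set)"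
    and "prob_space \<pi>\<^sub>0" and "sets \<pi>\<^sub>0 = sets borel"
    and "\<forall>U. open U \<and> U \<noteq> {} \<longrightarrow> emeasure \<pi>\<^sub>0 U > 0"
    and "prob_space \<nu>" and "sets \<nu> = sets borel"
    and "support \<nu> = UNIV"
    and "continuous_on UNIV \<phi>"
    and "is_jacobian \<nu> \<pi>\<^sub>0 (\<lambda>z. exp (\<phi> z))"
  shows "\<exists>\<psi>\<^sub>0 :: 'a \<times> 'b \<Rightarrow> real. continuous_on UNIV \<psi>\<^sub>0 \<and>
           is_jacobian (distr \<pi>\<^sub>0 borel fst) \<pi>\<^sub>0 (\<lambda>z. exp (\<psi>\<^sub>0 z)) \<and>
           (\<forall>\<pi> :: ('a \<times> 'b) measure. prob_space \<pi> \<and> sets \<pi> = sets borel \<longrightarrow>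
              - ereal (\<integral>z. \<psi>\<^sub>0 z \<partial>\<pi>) - rel_entropy_H (distr \<pi>\<^sub>0 borel fst) \<pi>
              = - ereal (\<integral>z. \<phi> z \<partial>\<pi>) - rel_entropy_H \<nu> \<pi>)"
proof -
  note sx[measurable_cong] = assms(4) assms(7)
  interpret pi: prob_space \<pi>\<^sub>0 by fact
  interpret nu: prob_space \<nu> by fact
  have cU: "compact (UNIV :: ('a \<times> 'b) set)"
    using compact_Times[OF assms(1,2)] by simp
  have "bounded (\<phi> ` UNIV)"
    by (rule compact_imp_bounded, rule compact_continuous_image[OF assms(9) cU])
  then obtain B where B: "\<And>z. \<bar>\<phi> z\<bar> \<le> B"
    unfolding bounded_real by auto
  have B1: "- B \<le> \<phi> z \<and> \<phi> z \<le> B" for z using B[of z] by linarith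
  have phim[measurable]: "\<phi> \<in> borel_measurable borel"
    by (rule borel_measurable_continuous_onI[OF assms(9)])
  have sndm[measurable]: "snd \<in> borel_measurable (borel :: ('a \<times> 'b) measure)"
    by (rule borel_measurable_continuous_onI) (intro continuous_intros)
  have fstm[measurable]: "fst \<in> borel_measurable (borel :: ('a \<times> 'b) measure)"
    by (rule borel_measurable_continuous_onI) (intro continuous_intros)
  have [measurable_cong]: "sets (borel \<Otimes>\<^sub>M borel) = sets (borel :: ('a \<times> 'b) measure)"
    by (subst borel_prod) (rule refl)
  define Q where "Q = distr \<pi>\<^sub>0 borel snd"
  define P0 where "P0 = distr \<pi>\<^sub>0 borel fst"
  have sQ[measurable_cong]: "sets Q = sets borel" unfolding Q_def by simp
  interpret Q: prob_space Q unfolding Q_def by (rule pi.prob_space_distr) simp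
  define f where "f x = (\<integral>y. exp (\<phi> (x, y)) \<partial>Q)" for x
  have intQ: "integrable Q (\<lambda>y. exp (\<phi> (x, y)))" for x
    by (rule Q.integrable_const_bound[where B="exp B"], rule AE_I2) (use B1 in \<open>auto\<close>)
  have flo: "exp (- B) \<le> f x" for x
    unfolding f_def by (rule Q.integral_ge_const[OF intQ], rule AE_I2) (use B1 in \<open>auto\<close>)
  have fhi: "f x \<le> exp B" for x
    unfolding f_def by (rule Q.integral_le_const[OF intQ], rule AE_I2) (use B1 in \<open>auto\<close>)
  have fpos: "0 < f x" for x using flo[of x] by (smt (verit) exp_gt_zero)
  have fcont: "continuous_on UNIV f"
  proof (rule continuous_on_sequentiallyI)
    fix u :: "nat \<Rightarrow> 'a" and a assume u: "u \<longlonglongrightarrow> a"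
    show "(\<lambda>n. f (u n)) \<longlonglongrightarrow> f a" unfolding f_def
    proof (rule integral_dominated_convergence[where w="\<lambda>y. exp B"])
      show "AE y in Q. (\<lambda>i. exp (\<phi> (u i, y))) \<longlonglongrightarrow> exp (\<phi> (a, y))"
      proof (rule AE_I2)
        fix y
        have "isCont \<phi> (a, y)" using assms(9) by (simp add: continuous_on_eq_continuous_at)
        then have "(\<lambda>i. \<phi> (u i, y)) \<longlonglongrightarrow> \<phi> (a, y)"
          by (rule isCont_tendsto_compose) (intro tendsto_Pair u tendsto_const)
        then show "(\<lambda>i. exp (\<phi> (u i, y))) \<longlonglongrightarrow> exp (\<phi> (a, y))" by (rule tendsto_exp)
      qed
      show "AE y in Q. norm (exp (\<phi> (u i, y))) \<le> exp B" for i
        by (rule AE_I2) (use B1 in auto)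
    qed auto
  qed
  have fm[measurable]: "f \<in> borel_measurable borel"
    by (rule borel_measurable_continuous_onI[OF fcont])
  have P0eq: "P0 = density \<nu> (\<lambda>x. ennreal (f x))"
  proof (rule measure_eqI)
    show "sets P0 = sets (density \<nu> (\<lambda>x. ennreal (f x)))" unfolding P0_def using assms(7) by simp
    fix A assume "A \<in> sets P0"
    then have A[measurable]: "A \<in> sets borel" unfolding P0_def by simp
    interpret nq: pair_sigma_finite \<nu> Q
      by (intro pair_sigma_finite.intro nu.sigma_finite_measure_axioms Q.sigma_finite_measure_axioms)
    define g :: "'a \<times> 'b \<Rightarrow> real" where "g z = indicator A (fst z)" for z
    have gm[measurable]: "g \<in> borel_measurable borel" unfolding g_def by measurable
    have gb: "\<bar>g z\<bar> \<le> 1" for z unfolding g_def by (simp add: indicator_def)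
    have jg: "(\<integral>y. (\<integral>x. g (x, y) * exp (\<phi> (x, y)) \<partial>\<nu>) \<partial>Q) = (\<integral>z. g z \<partial>\<pi>\<^sub>0)"
      using assms(10) gm gb unfolding is_jacobian_def Q_def by blast
    have Fm[measurable]: "(\<lambda>(x, y). ennreal (g (x, y) * exp (\<phi> (x, y)))) \<in> borel_measurable (\<nu> \<Otimes>\<^sub>M Q)"
      by measurable
    have Gb: "\<bar>g (x, y) * exp (\<phi> (x, y))\<bar> \<le> exp B" for x y
    proof -
      have "\<bar>g (x, y) * exp (\<phi> (x, y))\<bar> \<le> 1 * exp (\<phi> (x, y))"
        using gb[of "(x,y)"] by (simp add: abs_mult mult_right_mono)
      also have "\<dots> \<le> exp B" using B1[of "(x,y)"] by simp
      finally show ?thesis .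
    qed
    have g0: "0 \<le> g z" for z unfolding g_def by simp
    have inn: "(\<integral>\<^sup>+x. ennreal (g (x, y) * exp (\<phi> (x, y))) \<partial>\<nu>) = ennreal (\<integral>x. g (x, y) * exp (\<phi> (x, y)) \<partial>\<nu>)" for y
      by (rule nn_integral_eq_integral, rule nu.integrable_const_bound[where B="exp B"])
         (use Gb g0 in \<open>auto intro!: AE_I2\<close>)
    have Gm[measurable]: "(\<lambda>y. \<integral>x. g (x, y) * exp (\<phi> (x, y)) \<partial>\<nu>) \<in> borel_measurable Q"
      by measurable
    have Gint: "integrable \<nu> (\<lambda>x. g (x, y) * exp (\<phi> (x, y)))" for y
      by (rule nu.integrable_const_bound[where B="exp B"]) (use Gb in \<open>auto intro!: AE_I2\<close>)
    have G0: "0 \<le> (\<integral>x. g (x, y) * exp (\<phi> (x, y)) \<partial>\<nu>)" for y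
      by (rule Bochner_Integration.integral_nonneg) (simp add: g0)
    have Gle: "(\<integral>x. g (x, y) * exp (\<phi> (x, y)) \<partial>\<nu>) \<le> exp B" for y
      by (rule nu.integral_le_const[OF Gint], rule AE_I2) (use Gb in \<open>auto simp: abs_le_iff\<close>)
    have outn: "(\<integral>\<^sup>+y. ennreal (\<integral>x. g (x, y) * exp (\<phi> (x, y)) \<partial>\<nu>) \<partial>Q) = ennreal (\<integral>y. (\<integral>x. g (x, y) * exp (\<phi> (x, y)) \<partial>\<nu>) \<partial>Q)"
      by (rule nn_integral_eq_integral, rule Q.integrable_const_bound[where B="exp B"])
         (use G0 Gle in \<open>auto intro!: AE_I2\<close>)
    have "emeasure P0 A = emeasure \<pi>\<^sub>0 (fst -` A \<inter> space \<pi>\<^sub>0)"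
      unfolding P0_def by (rule emeasure_distr) measurable
    also have "\<dots> = (\<integral>\<^sup>+z. indicator (fst -` A \<inter> space \<pi>\<^sub>0) z \<partial>\<pi>\<^sub>0)"
      by (rule nn_integral_indicator[symmetric]) measurable
    also have "\<dots> = (\<integral>\<^sup>+z. ennreal (g z) \<partial>\<pi>\<^sub>0)"
      by (rule nn_integral_cong) (simp add: g_def indicator_def)
    also have "\<dots> = ennreal (\<integral>z. g z \<partial>\<pi>\<^sub>0)"
      by (rule nn_integral_eq_integral, rule pi.integrable_const_bound[where B=1]) (use gb g0 in \<open>auto intro!: AE_I2\<close>)
    also have "\<dots> = (\<integral>\<^sup>+y. (\<integral>\<^sup>+x. ennreal (g (x, y) * exp (\<phi> (x, y))) \<partial>\<nu>) \<partial>Q)"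
      unfolding inn outn jg ..
    also have "\<dots> = (\<integral>\<^sup>+x. (\<integral>\<^sup>+y. ennreal (g (x, y) * exp (\<phi> (x, y))) \<partial>Q) \<partial>\<nu>)"
      by (rule nq.Fubini') (use Fm in simp)
    also have "\<dots> = (\<integral>\<^sup>+x. ennreal (f x) * indicator A x \<partial>\<nu>)"
    proof (rule nn_integral_cong)
      fix x
      show "(\<integral>\<^sup>+y. ennreal (g (x, y) * exp (\<phi> (x, y))) \<partial>Q) = ennreal (f x) * indicator A x"
      proof (cases "x \<in> A")
        case True
        then show ?thesis unfolding g_def f_def
          using nn_integral_eq_integral[OF intQ[of x]] by simp
      next
        case False
        then show ?thesis unfolding g_def by simp
      qed
    qed
    also have "\<dots> = emeasure (density \<nu> (\<lambda>x. ennreal (f x))) A"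
    proof -
      have Anu: "A \<in> sets \<nu>" unfolding assms(7) by (rule A)
      have fmn: "(\<lambda>x. ennreal (f x)) \<in> borel_measurable \<nu>" by measurable
      show ?thesis by (rule emeasure_density[symmetric, OF fmn Anu])
    qed
    finally show "emeasure P0 A = emeasure (density \<nu> (\<lambda>x. ennreal (f x))) A" .
  qed
  define \<psi> where "\<psi> z = \<phi> z - ln (f (fst z))" for z
  have psicont: "continuous_on UNIV \<psi>"
  proof -
    have "continuous_on UNIV (\<lambda>z. f (fst z))"
      by (rule continuous_on_compose2[OF fcont continuous_on_fst]) (auto intro: continuous_on_id)
    then show ?thesis unfolding \<psi>_def using fpos
      by (intro continuous_intros assms(9)) (auto simp: less_imp_neq[symmetric])
  qed
  have jac: "is_jacobian P0 \<pi>\<^sub>0 (\<lambda>z. exp (\<psi> z))"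
  proof -
    have psim[measurable]: "\<psi> \<in> borel_measurable borel"
      by (rule borel_measurable_continuous_onI[OF psicont])
    have ex: "f x * exp (\<psi> (x, y)) = exp (\<phi> (x, y))" for x y
      using fpos[of x] by (simp add: \<psi>_def exp_diff)
    have j1: "(\<integral>\<^sup>+ x. ennreal (exp (\<phi> (x, y))) \<partial>\<nu>) = 1" for y
      using assms(10) unfolding is_jacobian_def by blast
    have "(\<integral>\<^sup>+ x. ennreal (exp (\<psi> (x, y))) \<partial>P0) = 1" for y
    proof -
      have "(\<integral>\<^sup>+ x. ennreal (exp (\<psi> (x, y))) \<partial>P0) = (\<integral>\<^sup>+x. ennreal (f x) * ennreal (exp (\<psi> (x,y))) \<partial>\<nu>)"
        unfolding P0eq by (rule nn_integral_density) measurable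
      also have "\<dots> = (\<integral>\<^sup>+ x. ennreal (exp (\<phi> (x, y))) \<partial>\<nu>)"
        by (rule nn_integral_cong) (simp add: ennreal_mult[symmetric] fpos less_imp_le ex)
      finally show ?thesis using j1 by simp
    qed
    moreover have "(\<integral>y. (\<integral>x. g (x, y) * exp (\<psi> (x, y)) \<partial>P0) \<partial>(distr \<pi>\<^sub>0 borel snd)) = (\<integral>z. g z \<partial>\<pi>\<^sub>0)"
      if gm[measurable]: "g \<in> borel_measurable (borel :: ('a \<times> 'b) measure)" and gb: "\<exists>B. \<forall>z. \<bar>g z\<bar> \<le> B" for g
    proof -
      have "(\<integral>x. g (x, y) * exp (\<psi> (x, y)) \<partial>P0) = (\<integral>x. g (x, y) * exp (\<phi> (x, y)) \<partial>\<nu>)" for y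
      proof -
        have "(\<integral>x. g (x, y) * exp (\<psi> (x, y)) \<partial>P0) = (\<integral>x. f x *\<^sub>R (g (x, y) * exp (\<psi> (x, y))) \<partial>\<nu>)"
          unfolding P0eq by (rule integral_density) (measurable, use fpos in \<open>auto intro: less_imp_le\<close>)
        also have "\<dots> = (\<integral>x. g (x, y) * exp (\<phi> (x, y)) \<partial>\<nu>)"
          by (rule Bochner_Integration.integral_cong) (auto simp: ex[symmetric])
        finally show ?thesis .
      qed
      then show ?thesis
        using assms(10) gm gb unfolding is_jacobian_def by simp
    qed
    moreover have "(\<lambda>z. exp (\<psi> z)) \<in> borel_measurable borel" by measurable
    ultimately show ?thesis unfolding is_jacobian_def by auto
  qed
  have H: "- ereal (\<integral>z. \<psi> z \<partial>\<pi>) - rel_entropy_H P0 \<pi>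
              = - ereal (\<integral>z. \<phi> z \<partial>\<pi>) - rel_entropy_H \<nu> \<pi>"
    if pp: "prob_space \<pi>" and sp: "sets \<pi> = sets borel" for \<pi> :: "('a \<times> 'b) measure"
  proof -
    interpret p: prob_space \<pi> by fact
    note [measurable_cong] = sp
    define h :: "'a \<times> 'b \<Rightarrow> real" where "h z = ln (f (fst z))" for z
    have hb: "\<bar>h z\<bar> \<le> B" for z
    proof -
      have "- B \<le> ln (f (fst z))" using flo[of "fst z"] fpos[of "fst z"] by (simp add: ln_ge_iff)
      moreover have "ln (f (fst z)) \<le> B" using fhi[of "fst z"] fpos[of "fst z"] ln_le_cancel_iff[of "f (fst z)" "exp B"] by simp
      ultimately show ?thesis unfolding h_def by simp
    qed
    have hm[measurable]: "h \<in> borel_measurable \<pi>" unfolding h_def by measurable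
    have hm'[measurable]: "h \<in> borel_measurable borel" unfolding h_def by measurable
    have ih: "integrable \<pi> h"
      by (rule p.integrable_const_bound[where B=B], rule AE_I2) (use hb in auto)
    have iphi: "integrable \<pi> \<phi>"
      by (rule p.integrable_const_bound[where B=B], rule AE_I2) (use B in auto)
    have "\<psi> = (\<lambda>z. \<phi> z - h z)" by (auto simp: \<psi>_def h_def fun_eq_iff)
    then have intpsi: "(\<integral>z. \<psi> z \<partial>\<pi>) = (\<integral>z. \<phi> z \<partial>\<pi>) - (\<integral>z. h z \<partial>\<pi>)"
      using ih iphi by simp
    have dens: "(\<integral>\<^sup>+x. ennreal (exp (c (x,y))) \<partial>P0) = (\<integral>\<^sup>+x. ennreal (exp (c (x,y) + h (x,y))) \<partial>\<nu>)"
      if cm: "c \<in> borel_measurable (borel :: ('a \<times> 'b) measure)" for c y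
    proof -
      have [measurable]: "c \<in> borel_measurable borel" by fact
      have "(\<integral>\<^sup>+x. ennreal (exp (c (x,y))) \<partial>P0) = (\<integral>\<^sup>+x. ennreal (f x) * ennreal (exp (c (x,y))) \<partial>\<nu>)"
        unfolding P0eq by (rule nn_integral_density) measurable
      also have "\<dots> = (\<integral>\<^sup>+x. ennreal (exp (c (x,y) + h (x,y))) \<partial>\<nu>)"
        by (rule nn_integral_cong) (simp add: h_def exp_add fpos less_imp_le ennreal_mult[symmetric] mult.commute)
      finally show ?thesis .
    qed
    have cm: "c \<in> borel_measurable borel" if "int_well_defined \<pi> c" for c
      using that unfolding int_well_defined_def by (simp add: measurable_cong_sets[OF sp refl])
    define S1 where "S1 = {c. int_well_defined \<pi> c \<and> (\<forall>y. (\<integral>\<^sup>+ x. ennreal (exp (c (x, y))) \<partial>P0) = 1)}"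
    define S2 where "S2 = {c. int_well_defined \<pi> c \<and> (\<forall>y. (\<integral>\<^sup>+ x. ennreal (exp (c (x, y))) \<partial>\<nu>) = 1)}"
    have fmp: "finite_measure \<pi>" by (rule p.finite_measure_axioms)
    have hb': "\<bar>- h z\<bar> \<le> B" for z using hb[of z] by simp
    have img: "(\<lambda>c z. c z + h z) ` S1 = S2"
    proof
      show "(\<lambda>c z. c z + h z) ` S1 \<subseteq> S2"
      proof clarify
        fix c assume "c \<in> S1"
        then have c1: "int_well_defined \<pi> c" "\<And>y. (\<integral>\<^sup>+ x. ennreal (exp (c (x, y))) \<partial>P0) = 1"
          unfolding S1_def by auto
        have "(\<lambda>z. c z + h z) \<in> borel_measurable borel" using cm[OF c1(1)] by measurable
        show "(\<lambda>z. c z + h z) \<in> S2"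
          unfolding S2_def using shift_iwd(1)[OF fmp hm hb c1(1)] c1(2) dens[OF cm[OF c1(1)]] by auto
      qed
      show "S2 \<subseteq> (\<lambda>c z. c z + h z) ` S1"
      proof
        fix d assume "d \<in> S2"
        then have d1: "int_well_defined \<pi> d" "\<And>y. (\<integral>\<^sup>+ x. ennreal (exp (d (x, y))) \<partial>\<nu>) = 1"
          unfolding S2_def by auto
        have hm2: "(\<lambda>z. - h z) \<in> borel_measurable \<pi>" by measurable
        have i2: "int_well_defined \<pi> (\<lambda>z. d z + - h z)"
          by (rule shift_iwd(1)[OF fmp hm2 hb' d1(1)])
        have "(\<lambda>z. d z + - h z) \<in> S1"
          unfolding S1_def using i2 d1(2) dens[OF cm[OF i2]] by simp
        then show "d \<in> (\<lambda>c z. c z + h z) ` S1"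
          by (intro image_eqI[where x="\<lambda>z. d z + - h z"]) auto
      qed
    qed
    have ne: "S1 \<noteq> {}"
    proof -
      interpret P0: prob_space P0 unfolding P0_def by (rule pi.prob_space_distr) simp
      have "(\<lambda>_. 0) \<in> S1"
        unfolding S1_def int_well_defined_def by (simp add: P0.emeasure_space_1)
      then show ?thesis by auto
    qed
    have E: "ext_integral \<pi> c = ext_integral \<pi> (\<lambda>z. c z + h z) + ereal (- (\<integral>z. h z \<partial>\<pi>))"
      if "c \<in> S1" for c
    proof -
      have "int_well_defined \<pi> c" using that unfolding S1_def by auto
      from shift_iwd(2)[OF fmp hm hb this] show ?thesis
        by (cases "ext_integral \<pi> c") auto
    qed
    have "(SUP c\<in>S1. ext_integral \<pi> c) = (SUP c\<in>S1. ext_integral \<pi> (\<lambda>z. c z + h z) + ereal (- (\<integral>z. h z \<partial>\<pi>)))"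
      using E by (intro SUP_cong) auto
    also have "\<dots> = (SUP c\<in>S1. ext_integral \<pi> (\<lambda>z. c z + h z)) + ereal (- (\<integral>z. h z \<partial>\<pi>))"
      by (rule SUP_ereal_add_left[OF ne]) simp
    also have "(SUP c\<in>S1. ext_integral \<pi> (\<lambda>z. c z + h z)) = (SUP d\<in>S2. ext_integral \<pi> d)"
      unfolding img[symmetric] by (simp add: image_comp o_def)
    finally have SS: "(SUP c\<in>S1. ext_integral \<pi> c) = (SUP d\<in>S2. ext_integral \<pi> d) + ereal (- (\<integral>z. h z \<partial>\<pi>))" .
    have H1: "rel_entropy_H P0 \<pi> = - (SUP c\<in>S1. ext_integral \<pi> c)"
      unfolding rel_entropy_H_def S1_def ..
    have H2: "rel_entropy_H \<nu> \<pi> = - (SUP c\<in>S2. ext_integral \<pi> c)"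
      unfolding rel_entropy_H_def S2_def ..
    show ?thesis unfolding H1 H2 SS intpsi
      by (cases "(SUP d\<in>S2. ext_integral \<pi> d)") auto
  qed
  show ?thesis
    using psicont jac H unfolding P0_def by blast
qed

end
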